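(* Let $M$ be a matroid on $S$ and $N$ a matroid on $T$ with $S\cap T=\emptyset$, and let $L=M\mathbin{\Box} N$. A subset $A\neq S$ of $S\cup T$ is a cyclic flat of $L$ if and only if either $A\subseteq S$ and $A$ is a cyclic flat of $M$, or $A=S\cup B$ where $B$ is a nonempty cyclic flat of $N$. The set $S$ is a cyclic flat of $L$ if and only if $M$ has no isthmus and $N$ has no loop.
   Context: For a matroid $M$ on $S$ write $\rho_M$ for rank, $\rho(M)=\rho_M(S)$, $\nu_M(A)=|A|-\rho_M(A)$, $\lambda_M(A)=\rho(M)-\rho_M(A)$. For matroids $M$ on $S$ and $N$ on $T$ with $S\cap T=\emptyset$, the free product $M\mathbin{\Box} N$ is the matroid on $S\cup T$ whose independent sets are those $A$ with $A\cap S$ independent in $M$ and $\lambda_M(A\cap S)\geq\nu_N(A\cap T)$. A cyclic flat is a flat that is a union of circuits (equivalently a flat $F$ with $M|F$ isthmusless). *)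

theory Defs
  imports Main
begin

definition matroid :: "'a set \<Rightarrow> ('a set \<Rightarrow> bool) \<Rightarrow> bool" where
  "matroid E indep \<longleftrightarrow>
     finite E \<and>
     (\<forall>X. indep X \<longrightarrow> X \<subseteq> E) \<and>
     indep {} \<and>
     (\<forall>X Y. indep X \<and> Y \<subseteq> X \<longrightarrow> indep Y) \<and>
     (\<forall>X Y. indep X \<and> indep Y \<and> card X < card Y \<longrightarrow> (\<exists>e\<in>Y - X. indep (insert e X)))"

definition rk :: "('a set \<Rightarrow> bool) \<Rightarrow> 'a set \<Rightarrow> nat" where
  "rk indep X = Max {card I | I. I \<subseteq> X \<and> indep I}"

definition nullity :: "('a set \<Rightarrow> bool) \<Rightarrow> 'a set \<Rightarrow> int" where
  "nullity indep A = int (card A) - int (rk indep A)"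

definition corank_gap :: "'a set \<Rightarrow> ('a set \<Rightarrow> bool) \<Rightarrow> 'a set \<Rightarrow> int" where
  "corank_gap E indep A = int (rk indep E) - int (rk indep A)"

definition free_product_indep ::
  "'a set \<Rightarrow> ('a set \<Rightarrow> bool) \<Rightarrow> 'a set \<Rightarrow> ('a set \<Rightarrow> bool) \<Rightarrow> 'a set \<Rightarrow> bool" where
  "free_product_indep S indM T indN A \<longleftrightarrow>
     A \<subseteq> S \<union> T \<and> indM (A \<inter> S) \<and>
     corank_gap S indM (A \<inter> S) \<ge> nullity indN (A \<inter> T)"

definition circuit :: "'a set \<Rightarrow> ('a set \<Rightarrow> bool) \<Rightarrow> 'a set \<Rightarrow> bool" where
  "circuit E indep C \<longleftrightarrow> C \<subseteq> E \<and> \<not> indep C \<and> (\<forall>D. D \<subset> C \<longrightarrow> indep D)"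

definition flat :: "'a set \<Rightarrow> ('a set \<Rightarrow> bool) \<Rightarrow> 'a set \<Rightarrow> bool" where
  "flat E indep F \<longleftrightarrow> F \<subseteq> E \<and> (\<forall>e \<in> E - F. rk indep (insert e F) > rk indep F)"

definition cyclic_flat :: "'a set \<Rightarrow> ('a set \<Rightarrow> bool) \<Rightarrow> 'a set \<Rightarrow> bool" where
  "cyclic_flat E indep F \<longleftrightarrow> flat E indep F \<and>
     (\<exists>\<C>. (\<forall>C\<in>\<C>. circuit E indep C) \<and> F = \<Union>\<C>)"

definition isthmus :: "'a set \<Rightarrow> ('a set \<Rightarrow> bool) \<Rightarrow> 'a \<Rightarrow> bool" where
  "isthmus E indep e \<longleftrightarrow> e \<in> E \<and> (\<forall>C. circuit E indep C \<longrightarrow> e \<notin> C)"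

definition loop :: "'a set \<Rightarrow> ('a set \<Rightarrow> bool) \<Rightarrow> 'a \<Rightarrow> bool" where
  "loop E indep e \<longleftrightarrow> e \<in> E \<and> circuit E indep {e}"

end

theory Submission
  imports Defs
begin


definition indsys :: "'a set \<Rightarrow> ('a set \<Rightarrow> bool) \<Rightarrow> bool" where
  "indsys E ind \<longleftrightarrow> finite E \<and> (\<forall>X. ind X \<longrightarrow> X \<subseteq> E) \<and> ind {}"

lemma matroid_indsys: "matroid E ind \<Longrightarrow> indsys E ind"
  unfolding matroid_def indsys_def by blast

lemma indsys_fin: "indsys E ind \<Longrightarrow> ind I \<Longrightarrow> finite I"
  unfolding indsys_def by (meson finite_subset)

lemma rk_set_finite:
  assumes "indsys E ind"
  shows "finite {card I | I. I \<subseteq> X \<and> ind I}"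
proof -
  have "{card I | I. I \<subseteq> X \<and> ind I} \<subseteq> {..card E}"
    using assms unfolding indsys_def by (auto intro: card_mono)
  then show ?thesis using finite_subset by blast
qed

lemma rk_ge: "indsys E ind \<Longrightarrow> ind I \<Longrightarrow> I \<subseteq> X \<Longrightarrow> card I \<le> rk ind X"
  unfolding rk_def by (rule Max_ge[OF rk_set_finite]) auto

lemma rk_obtain:
  assumes "indsys E ind"
  shows "\<exists>I. I \<subseteq> X \<and> ind I \<and> card I = rk ind X"
proof -
  have ne: "{card I | I. I \<subseteq> X \<and> ind I} \<noteq> {}" using assms unfolding indsys_def by auto
  have "rk ind X \<in> {card I | I. I \<subseteq> X \<and> ind I}"
    unfolding rk_def by (rule Max_in[OF rk_set_finite[OF assms] ne])
  then show ?thesis by auto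
qed

lemma rk_le_card: "indsys E ind \<Longrightarrow> finite X \<Longrightarrow> rk ind X \<le> card X"
  by (metis card_mono rk_obtain)

lemma rk_mono: "indsys E ind \<Longrightarrow> X \<subseteq> Y \<Longrightarrow> rk ind X \<le> rk ind Y"
  by (metis order_trans rk_ge rk_obtain)

lemma rk_indep: "indsys E ind \<Longrightarrow> ind X \<Longrightarrow> rk ind X = card X"
  by (metis card_mono indsys_fin le_antisym rk_ge rk_obtain order_refl)

lemma rk_empty: "indsys E ind \<Longrightarrow> rk ind {} = 0"
  using rk_le_card by fastforce

lemma matroid_down: "matroid E ind \<Longrightarrow> ind X \<Longrightarrow> Y \<subseteq> X \<Longrightarrow> ind Y"
  unfolding matroid_def by blast

lemma matroid_aug: "matroid E ind \<Longrightarrow> ind X \<Longrightarrow> ind Y \<Longrightarrow> card X < card Y \<Longrightarrow> \<exists>e\<in>Y - X. ind (insert e X)"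
  unfolding matroid_def by blast

lemma rk_insert:
  assumes "matroid E ind"
  shows "rk ind (insert e X) \<le> rk ind X + 1"
proof -
  have isy: "indsys E ind" using assms by (rule matroid_indsys)
  obtain J where J: "J \<subseteq> insert e X" "ind J" "card J = rk ind (insert e X)"
    using rk_obtain[OF isy] by blast
  have "ind (J - {e})" using matroid_down[OF assms J(2)] by blast
  then have "card (J - {e}) \<le> rk ind X" using J(1) by (intro rk_ge[OF isy]) auto
  moreover have "card J \<le> card (J - {e}) + 1"
    using indsys_fin[OF isy J(2)] by (metis card_Diff1_le card_Diff_singleton_if le_SucI nat_le_linear add.commute plus_1_eq_Suc card.remove)
  ultimately show ?thesis using J(3) by linarith
qed

lemma max_indep_rk:
  assumes "matroid E ind" "I \<subseteq> X" "ind I" "\<forall>e\<in>X - I. \<not> ind (insert e I)"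
  shows "card I = rk ind X"
proof -
  have isy: "indsys E ind" using assms(1) by (rule matroid_indsys)
  obtain J where J: "J \<subseteq> X" "ind J" "card J = rk ind X" using rk_obtain[OF isy] by blast
  have "\<not> card I < card J"
  proof
    assume "card I < card J"
    then obtain e where "e \<in> J - I" "ind (insert e I)" using matroid_aug[OF assms(1) assms(3) J(2)] by blast
    then show False using assms(4) J(1) by blast
  qed
  moreover have "card I \<le> rk ind X" using rk_ge[OF isy assms(3,2)] .
  ultimately show ?thesis using J(3) by linarith
qed

lemma extend_max:
  assumes "matroid E ind" "ind I0" "I0 \<subseteq> X" "X \<subseteq> E"
  shows "\<exists>I. I0 \<subseteq> I \<and> I \<subseteq> X \<and> ind I \<and> (\<forall>e\<in>X - I. \<not> ind (insert e I))"
proof -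
  have fin: "finite X" using assms(1,4) unfolding matroid_def by (meson finite_subset)
  let ?F = "{I. I0 \<subseteq> I \<and> I \<subseteq> X \<and> ind I}"
  have "?F \<subseteq> Pow X" by auto
  then have fF: "finite ?F" using fin by (meson finite_Pow_iff finite_subset)
  have neF: "?F \<noteq> {}" using assms by auto
  obtain m where m1: "m \<in> ?F" and m2: "\<forall>b\<in>?F. m \<le> b \<longrightarrow> m = b"
    using finite_has_maximal[OF fF neF] by (elim bexE)
  have m: "m \<in> ?F" "\<And>b. b \<in> ?F \<Longrightarrow> m \<le> b \<Longrightarrow> m = b" using m1 m2 by auto
  have mx: "\<not> ind (insert e m)" if e: "e \<in> X - m" for e
  proof
    assume ie: "ind (insert e m)"
    have "insert e m \<in> ?F" using m(1) e ie by auto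
    then have "m = insert e m" using m(2) by blast
    then show False using e by blast
  qed
  show ?thesis using m(1) mx by blast
qed

lemma rk_stable:
  assumes "matroid E ind" "Y \<subseteq> X" "X \<subseteq> E" "\<forall>e\<in>X - Y. rk ind (insert e Y) = rk ind Y"
  shows "rk ind X = rk ind Y"
proof -
  have isy: "indsys E ind" using assms(1) by (rule matroid_indsys)
  obtain K where K: "K \<subseteq> Y" "ind K" "card K = rk ind Y" using rk_obtain[OF isy] by blast
  have fK: "finite K" using indsys_fin[OF isy K(2)] .
  have "card K = rk ind X"
  proof (rule max_indep_rk[OF assms(1)])
    show "K \<subseteq> X" using K assms by auto
    show "ind K" by fact
    show "\<forall>e\<in>X - K. \<not> ind (insert e K)"
    proof (intro ballI notI)
      fix e assume e: "e \<in> X - K" and ie: "ind (insert e K)"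
      have c: "card (insert e K) = card K + 1" using e fK by simp
      show False
      proof (cases "e \<in> Y")
        case True
        then have "card (insert e K) \<le> rk ind Y" using K(1) by (intro rk_ge[OF isy ie]) auto
        then show False using c K(3) by linarith
      next
        case False
        then have "card (insert e K) \<le> rk ind (insert e Y)" using K(1) by (intro rk_ge[OF isy ie]) auto
        then show False using c K(3) assms(4) e False by auto
      qed
    qed
  qed
  then show ?thesis using K(3) by simp
qed

lemma in_circuit_iff:
  assumes "matroid E ind" "A \<subseteq> E" "e \<in> A"
  shows "(\<exists>C. circuit E ind C \<and> e \<in> C \<and> C \<subseteq> A) \<longleftrightarrow> rk ind (A - {e}) = rk ind A"
proof
  have isy: "indsys E ind" using assms(1) by (rule matroid_indsys)
  assume "\<exists>C. circuit E ind C \<and> e \<in> C \<and> C \<subseteq> A"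
  then obtain C where C: "circuit E ind C" "e \<in> C" "C \<subseteq> A" by blast
  have "ind (C - {e})" using C unfolding circuit_def by blast
  then obtain I where I: "C - {e} \<subseteq> I" "I \<subseteq> A - {e}" "ind I" "\<forall>f\<in>(A - {e}) - I. \<not> ind (insert f I)"
    using extend_max[OF assms(1), of "C - {e}" "A - {e}"] C assms(2) by blast
  have r1: "card I = rk ind (A - {e})" using max_indep_rk[OF assms(1) I(2,3,4)] .
  have "\<not> ind (insert e I)"
  proof
    assume "ind (insert e I)"
    moreover have "C \<subseteq> insert e I" using I(1) by blast
    ultimately have "ind C" using matroid_down[OF assms(1)] by blast
    then show False using C(1) unfolding circuit_def by blast
  qed
  then have "\<forall>f\<in>A - I. \<not> ind (insert f I)" using I(4) by blast
  then have "card I = rk ind A" using max_indep_rk[OF assms(1)] I(2,3) by blast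
  then show "rk ind (A - {e}) = rk ind A" using r1 by simp
next
  have isy: "indsys E ind" using assms(1) by (rule matroid_indsys)
  assume eq: "rk ind (A - {e}) = rk ind A"
  obtain I where I: "I \<subseteq> A - {e}" "ind I" "card I = rk ind (A - {e})" using rk_obtain[OF isy] by blast
  have fI: "finite I" using indsys_fin[OF isy I(2)] .
  have nd: "\<not> ind (insert e I)"
  proof
    assume "ind (insert e I)"
    then have "card (insert e I) \<le> rk ind A" using I(1) assms(3) by (intro rk_ge[OF isy]) auto
    moreover have "card (insert e I) = card I + 1" using I(1) fI by (metis Diff_iff card_insert_disjoint insertI1 subsetD Suc_eq_plus1)
    ultimately show False using I(3) eq by linarith
  qed
  let ?F = "{D. D \<subseteq> insert e I \<and> \<not> ind D}"
  have "?F \<subseteq> Pow (insert e I)" by auto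
  then have fF: "finite ?F" using fI by (meson finite_Pow_iff finite_insert finite_subset)
  have neF: "?F \<noteq> {}" using nd by auto
  obtain C where C1: "C \<in> ?F" and C2: "\<forall>b\<in>?F. b \<le> C \<longrightarrow> C = b"
    using finite_has_minimal[OF fF neF] by (elim bexE)
  note C = C1 C2
  have sub: "\<forall>D. D \<subset> C \<longrightarrow> ind D"
    using C by auto
  have "e \<in> C"
  proof (rule ccontr)
    assume "e \<notin> C"
    then have "C \<subseteq> I" using C(1) by auto
    then show False using C(1) matroid_down[OF assms(1) I(2)] by auto
  qed
  moreover have "C \<subseteq> A" using C(1) I(1) assms(3) by auto
  moreover have "circuit E ind C" unfolding circuit_def using C(1) sub \<open>C \<subseteq> A\<close> assms(2) by auto
  ultimately show "\<exists>C. circuit E ind C \<and> e \<in> C \<and> C \<subseteq> A" by blast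
qed

lemma cyclic_flat_iff:
  assumes "matroid E ind"
  shows "cyclic_flat E ind A \<longleftrightarrow> A \<subseteq> E \<and> (\<forall>e\<in>E - A. rk ind A < rk ind (insert e A))
      \<and> (\<forall>e\<in>A. rk ind (A - {e}) = rk ind A)"
proof -
  have u: "(\<exists>\<C>. (\<forall>C\<in>\<C>. circuit E ind C) \<and> A = \<Union>\<C>) \<longleftrightarrow>
        (\<forall>e\<in>A. \<exists>C. circuit E ind C \<and> e \<in> C \<and> C \<subseteq> A)"
  proof
    assume "\<exists>\<C>. (\<forall>C\<in>\<C>. circuit E ind C) \<and> A = \<Union>\<C>"
    then show "\<forall>e\<in>A. \<exists>C. circuit E ind C \<and> e \<in> C \<and> C \<subseteq> A" by blast
  next
    assume h: "\<forall>e\<in>A. \<exists>C. circuit E ind C \<and> e \<in> C \<and> C \<subseteq> A"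
    show "\<exists>\<C>. (\<forall>C\<in>\<C>. circuit E ind C) \<and> A = \<Union>\<C>"
      by (rule exI[of _ "{C. circuit E ind C \<and> C \<subseteq> A}"]) (use h in blast)
  qed
  show ?thesis
    unfolding cyclic_flat_def flat_def u using in_circuit_iff[OF assms] by blast
qed

lemma loop_iff:
  assumes "matroid E ind"
  shows "loop E ind e \<longleftrightarrow> e \<in> E \<and> rk ind {e} = 0"
proof -
  have isy: "indsys E ind" using assms(1) by (rule matroid_indsys)
  have "ind {}" using isy unfolding indsys_def by blast
  then have c: "circuit E ind {e} \<longleftrightarrow> e \<in> E \<and> \<not> ind {e}"
    unfolding circuit_def by (auto simp: subset_singleton_iff)
  have "rk ind {e} = 0 \<longleftrightarrow> \<not> ind {e}"
  proof
    assume "rk ind {e} = 0" then show "\<not> ind {e}" using rk_indep[OF isy] by fastforce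
  next
    assume n: "\<not> ind {e}"
    obtain I where "I \<subseteq> {e}" "ind I" "card I = rk ind {e}" using rk_obtain[OF isy] by blast
    then show "rk ind {e} = 0" using n by (metis card.empty subset_singleton_iff)
  qed
  then show ?thesis unfolding loop_def c by blast
qed

lemma isthmus_iff:
  assumes "matroid E ind"
  shows "isthmus E ind e \<longleftrightarrow> e \<in> E \<and> rk ind (E - {e}) \<noteq> rk ind E"
  unfolding isthmus_def using in_circuit_iff[OF assms order_refl, of e]
  by (auto simp: circuit_def)



lemma fp_indsys:
  assumes mM: "matroid S indM" and mN: "matroid T indN"
  shows "indsys (S \<union> T) (free_product_indep S indM T indN)"
proof -
  have iM: "indsys S indM" and iN: "indsys T indN" using mM mN by (auto intro: matroid_indsys)
  have "finite (S \<union> T)" using mM mN unfolding matroid_def by auto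
  moreover have "indM {}" using iM unfolding indsys_def by auto
  ultimately show ?thesis
    unfolding indsys_def free_product_indep_def corank_gap_def nullity_def
    using rk_empty[OF iM] rk_empty[OF iN] by auto
qed

lemma card_split:
  assumes "finite I" "I \<subseteq> S \<union> T" "S \<inter> T = {}"
  shows "card I = card (I \<inter> S) + card (I \<inter> T)"
proof -
  have "I = (I \<inter> S) \<union> (I \<inter> T)" using assms by auto
  then have "card I = card ((I \<inter> S) \<union> (I \<inter> T))" by simp
  also have "\<dots> = card (I \<inter> S) + card (I \<inter> T)"
    using assms by (intro card_Un_disjoint) auto
  finally show ?thesis .
qed

lemma rank_formula:
  assumes mM: "matroid S indM" and mN: "matroid T indN" and disj: "S \<inter> T = {}"
    and X: "X \<subseteq> S \<union> T"
  shows "rk (free_product_indep S indM T indN) X =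
     min (rk indM (X \<inter> S) + card (X \<inter> T)) (rk indM S + rk indN (X \<inter> T))"
proof -
  let ?L = "free_product_indep S indM T indN"
  have iM: "indsys S indM" and iN: "indsys T indN" using mM mN by (auto intro: matroid_indsys)
  have iL: "indsys (S \<union> T) ?L" using fp_indsys[OF mM mN] .
  have finS: "finite S" and finT: "finite T" using mM mN unfolding matroid_def by auto
  have finX: "finite X" using X finS finT by (meson finite_Un finite_subset)
  have le: "rk ?L X \<le> min (rk indM (X \<inter> S) + card (X \<inter> T)) (rk indM S + rk indN (X \<inter> T))"
  proof -
    obtain I where I: "I \<subseteq> X" "?L I" "card I = rk ?L X" using rk_obtain[OF iL] by blast
    have IST: "I \<subseteq> S \<union> T" and iIS: "indM (I \<inter> S)"
      and nul: "corank_gap S indM (I \<inter> S) \<ge> nullity indN (I \<inter> T)"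
      using I(2) unfolding free_product_indep_def by auto
    have finI: "finite I" using indsys_fin[OF iL I(2)] .
    have c: "card I = card (I \<inter> S) + card (I \<inter> T)" using card_split[OF finI IST disj] .
    have r1: "rk indM (I \<inter> S) = card (I \<inter> S)" using rk_indep[OF iM iIS] .
    have r2: "rk indM (I \<inter> S) \<le> rk indM (X \<inter> S)" using I(1) by (intro rk_mono[OF iM]) auto
    have r3: "card (I \<inter> T) \<le> card (X \<inter> T)" using I(1) finX by (intro card_mono) auto
    have r4: "rk indN (I \<inter> T) \<le> rk indN (X \<inter> T)" using I(1) by (intro rk_mono[OF iN]) auto
    have r5: "int (card (I \<inter> T)) - int (rk indN (I \<inter> T)) \<le> int (rk indM S) - int (rk indM (I \<inter> S))"
      using nul unfolding corank_gap_def nullity_def by simp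
    show ?thesis using c r1 r2 r3 r4 r5 I(3) by linarith
  qed
  have ge: "min (rk indM (X \<inter> S) + card (X \<inter> T)) (rk indM S + rk indN (X \<inter> T)) \<le> rk ?L X"
  proof -
    obtain IS where IS: "IS \<subseteq> X \<inter> S" "indM IS" "card IS = rk indM (X \<inter> S)" using rk_obtain[OF iM] by blast
    obtain K where K: "K \<subseteq> X \<inter> T" "indN K" "card K = rk indN (X \<inter> T)" using rk_obtain[OF iN] by blast
    define k where "k = rk indM S - rk indM (X \<inter> S)"
    have kle: "rk indM (X \<inter> S) \<le> rk indM S" by (rule rk_mono[OF iM]) auto
    have finXT: "finite (X \<inter> T - K)" using finX by auto
    obtain D where D: "D \<subseteq> X \<inter> T - K" "card D = min k (card (X \<inter> T - K))"
      using obtain_subset_with_card_n[of "min k (card (X \<inter> T - K))" "X \<inter> T - K"] by auto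
    have finK: "finite K" using indsys_fin[OF iN K(2)] .
    have finD: "finite D" using D(1) finXT finite_subset by blast
    define J where "J = K \<union> D"
    have cJ: "card J = card K + card D" unfolding J_def using D(1) finK finD by (intro card_Un_disjoint) auto
    have JX: "J \<subseteq> X \<inter> T" unfolding J_def using K(1) D(1) by auto
    have rJ: "rk indN J = card K"
    proof -
      have "card K \<le> rk indN J" unfolding J_def by (rule rk_ge[OF iN K(2)]) auto
      moreover have "rk indN J \<le> rk indN (X \<inter> T)" using JX by (rule rk_mono[OF iN])
      ultimately show ?thesis using K(3) by linarith
    qed
    have cXT: "card (X \<inter> T - K) = card (X \<inter> T) - card K"
      using K(1) finK by (simp add: card_Diff_subset Int_absorb1 inf.absorb_iff2)
    have cK: "card K \<le> card (X \<inter> T)" using K(1) finX by (intro card_mono) auto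
    define I where "I = IS \<union> J"
    have IS_S: "I \<inter> S = IS" unfolding I_def using IS(1) JX disj by auto
    have IS_T: "I \<inter> T = J" unfolding I_def using IS(1) JX disj by auto
    have "?L I"
      unfolding free_product_indep_def corank_gap_def nullity_def IS_S IS_T
    proof (intro conjI)
      show "I \<subseteq> S \<union> T" unfolding I_def using IS(1) JX by auto
      show "indM IS" by fact
      show "int (card J) - int (rk indN J) \<le> int (rk indM S) - int (rk indM IS)"
        using cJ rJ D(2) rk_indep[OF iM IS(2)] IS(3) k_def kle by simp
    qed
    moreover have "I \<subseteq> X" unfolding I_def using IS(1) JX by auto
    ultimately have "card I \<le> rk ?L X" by (rule rk_ge[OF iL])
    moreover have "card I = card IS + card J" unfolding I_def
      using IS(1) JX disj finK finD indsys_fin[OF iM IS(2)] J_def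
      by (intro card_Un_disjoint) auto
    ultimately show ?thesis using cJ D(2) IS(3) K(3) cXT cK k_def kle by linarith
  qed
  show ?thesis using le ge by linarith
qed



lemma rk_union_le:
  assumes "matroid E ind" "finite Z"
  shows "rk ind (Y \<union> Z) \<le> rk ind Y + card Z"
  using assms(2)
proof (induction Z rule: finite_induct)
  case empty then show ?case by simp
next
  case (insert z F)
  have "rk ind (Y \<union> insert z F) = rk ind (insert z (Y \<union> F))" by simp
  also have "\<dots> \<le> rk ind (Y \<union> F) + 1" by (rule rk_insert[OF assms(1)])
  finally show ?case using insert by simp
qed

lemma nullity_mono:
  assumes "matroid E ind" "Y \<subseteq> X" "finite X"
  shows "int (card Y) - int (rk ind Y) \<le> int (card X) - int (rk ind X)"
proof -
  have "X = Y \<union> (X - Y)" using assms by auto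
  then have "rk ind X \<le> rk ind Y + card (X - Y)"
    using rk_union_le[OF assms(1), of "X - Y" Y] assms(3) by simp
  moreover have "card X = card Y + card (X - Y)"
    using assms by (metis card_Diff_subset card_mono finite_subset le_add_diff_inverse)
  ultimately show ?thesis by linarith
qed

lemma fp_matroid:
  assumes mM: "matroid S indM" and mN: "matroid T indN" and disj: "S \<inter> T = {}"
  shows "matroid (S \<union> T) (free_product_indep S indM T indN)"
proof -
  let ?L = "free_product_indep S indM T indN"
  have iM: "indsys S indM" and iN: "indsys T indN" using mM mN by (auto intro: matroid_indsys)
  have iL: "indsys (S \<union> T) ?L" using fp_indsys[OF mM mN] .
  have finS: "finite S" and finT: "finite T" using mM mN unfolding matroid_def by auto
  have down: "\<forall>X Y. ?L X \<and> Y \<subseteq> X \<longrightarrow> ?L Y"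
  proof (intro allI impI)
    fix X Y assume h: "?L X \<and> Y \<subseteq> X"
    then have XST: "X \<subseteq> S \<union> T" and iX: "indM (X \<inter> S)"
      and c: "int (card (X \<inter> T)) - int (rk indN (X \<inter> T)) \<le> int (rk indM S) - int (rk indM (X \<inter> S))"
      unfolding free_product_indep_def corank_gap_def nullity_def by auto
    have iY: "indM (Y \<inter> S)" by (rule matroid_down[OF mM iX]) (use h in auto)
    have n: "int (card (Y \<inter> T)) - int (rk indN (Y \<inter> T)) \<le> int (card (X \<inter> T)) - int (rk indN (X \<inter> T))"
      using h finT by (intro nullity_mono[OF mN]) auto
    have "card (Y \<inter> S) \<le> card (X \<inter> S)" using h finS by (intro card_mono) auto
    then show "?L Y"
      unfolding free_product_indep_def corank_gap_def nullity_def
      using XST h iY c n rk_indep[OF iM iX] rk_indep[OF iM iY] by auto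
  qed
  have aug: "\<forall>I J. ?L I \<and> ?L J \<and> card I < card J \<longrightarrow> (\<exists>e\<in>J - I. ?L (insert e I))"
  proof (intro allI impI)
    fix I J assume h: "?L I \<and> ?L J \<and> card I < card J"
    show "\<exists>e\<in>J - I. ?L (insert e I)"
    proof (rule ccontr)
      assume H0: "\<not> (\<exists>e\<in>J - I. ?L (insert e I))"
      then have H: "\<And>e. e \<in> J \<Longrightarrow> e \<notin> I \<Longrightarrow> \<not> ?L (insert e I)" by blast
      define X where "X = I \<union> J"
      have IST: "I \<subseteq> S \<union> T" and JST: "J \<subseteq> S \<union> T" using h unfolding free_product_indep_def by auto
      have XST: "X \<subseteq> S \<union> T" using IST JST X_def by auto
      have finI: "finite I" using indsys_fin[OF iL] h by blast
      have cJ: "card J \<le> rk ?L X" using h X_def by (intro rk_ge[OF iL]) auto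
      define IS where "IS = I \<inter> S"
      define IT where "IT = I \<inter> T"
      have cI: "card I = card IS + card IT" using card_split[OF finI IST disj] IS_def IT_def by simp
      have iIS: "indM IS" and sl: "int (card IT) - int (rk indN IT) \<le> int (rk indM S) - int (card IS)"
        using h rk_indep[OF iM] unfolding free_product_indep_def corank_gap_def nullity_def IS_def IT_def
        by auto
      have finIT: "finite IT" using finT IT_def by auto
      have finIS: "finite IS" using finS IS_def by auto
      have RF: "rk ?L X = min (rk indM (X \<inter> S) + card (X \<inter> T)) (rk indM S + rk indN (X \<inter> T))"
        by (rule rank_formula[OF mM mN disj XST])
      have "rk ?L X \<le> card I"
      proof (cases "int (card IT) - int (rk indN IT) < int (rk indM S) - int (card IS)")
        case True
        have m1: "\<forall>e\<in>X \<inter> S - IS. \<not> indM (insert e IS)"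
        proof (intro ballI notI)
          fix e assume e: "e \<in> X \<inter> S - IS" and ie: "indM (insert e IS)"
          have eJ: "e \<in> J" "e \<notin> I" using e X_def IS_def by auto
          have r: "rk indM (insert e IS) = card IS + 1" using rk_indep[OF iM ie] e finIS by simp
          have "insert e I \<inter> S = insert e IS" "insert e I \<inter> T = IT" using e IS_def IT_def disj by auto
          then have "?L (insert e I)"
            unfolding free_product_indep_def corank_gap_def nullity_def
            using ie r True IST e XST by auto
          then show False using H eJ by blast
        qed
        have a1: "card IS = rk indM (X \<inter> S)"
          by (rule max_indep_rk[OF mM _ iIS m1]) (auto simp: IS_def X_def)
        have a2: "X \<inter> T \<subseteq> IT"
        proof
          fix e assume e: "e \<in> X \<inter> T"
          show "e \<in> IT"
          proof (rule ccontr)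
            assume ne: "e \<notin> IT"
            have eJ: "e \<in> J" "e \<notin> I" using e ne X_def IT_def by auto
            have s: "insert e I \<inter> S = IS" "insert e I \<inter> T = insert e IT" using e IS_def IT_def disj by auto
            have r: "rk indN IT \<le> rk indN (insert e IT)" by (rule rk_mono[OF iN]) auto
            have cc: "card (insert e IT) = card IT + 1" using ne finIT by simp
            have "?L (insert e I)"
              unfolding free_product_indep_def corank_gap_def nullity_def s
              using iIS True r cc IST e XST rk_indep[OF iM iIS] by auto
            then show False using H eJ by blast
          qed
        qed
        have "card (X \<inter> T) \<le> card IT" using a2 finIT by (rule card_mono[rotated])
        then show ?thesis using RF a1 cI by linarith
      next
        case False
        then have tight: "int (card IT) - int (rk indN IT) = int (rk indM S) - int (card IS)" using sl by linarith
        have st: "\<forall>e\<in>X \<inter> T - IT. rk indN (insert e IT) = rk indN IT"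
        proof (intro ballI)
          fix e assume e: "e \<in> X \<inter> T - IT"
          have eJ: "e \<in> J" "e \<notin> I" using e X_def IT_def by auto
          have s: "insert e I \<inter> S = IS" "insert e I \<inter> T = insert e IT" using e IS_def IT_def disj by auto
          have r: "rk indN IT \<le> rk indN (insert e IT)" by (rule rk_mono[OF iN]) auto
          have r2: "rk indN (insert e IT) \<le> rk indN IT + 1" by (rule rk_insert[OF mN])
          have cc: "card (insert e IT) = card IT + 1" using e finIT by simp
          show "rk indN (insert e IT) = rk indN IT"
          proof (rule ccontr)
            assume "rk indN (insert e IT) \<noteq> rk indN IT"
            then have "rk indN (insert e IT) = rk indN IT + 1" using r r2 by linarith
            then have "?L (insert e I)"
              unfolding free_product_indep_def corank_gap_def nullity_def s
              using iIS tight cc IST e XST rk_indep[OF iM iIS] by auto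
            then show False using H eJ by blast
          qed
        qed
        have "rk indN (X \<inter> T) = rk indN IT"
          by (rule rk_stable[OF mN _ _ st]) (auto simp: IT_def X_def)
        then show ?thesis using RF tight cI by linarith
      qed
      then show False using cJ h by linarith
    qed
  qed
  show ?thesis
    unfolding matroid_def using iL down aug unfolding indsys_def by blast
qed



theorem proposition6p1:
  fixes S T :: "'a set" and indM indN :: "'a set \<Rightarrow> bool"
  assumes "matroid S indM" and "matroid T indN" and "S \<inter> T = {}"
  defines "indL \<equiv> free_product_indep S indM T indN"
  shows "(\<forall>A. A \<subseteq> S \<union> T \<and> A \<noteq> S \<longrightarrow>
            (cyclic_flat (S \<union> T) indL A \<longleftrightarrow>
              (A \<subseteq> S \<and> cyclic_flat S indM A) \<or>
              (\<exists>B. B \<noteq> {} \<and> cyclic_flat T indN B \<and> A = S \<union> B)))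
       \<and> (cyclic_flat (S \<union> T) indL S \<longleftrightarrow>
            (\<nexists>e. isthmus S indM e) \<and> (\<nexists>e. loop T indN e))"
proof -
  note mM = assms(1) and mN = assms(2) and disj = assms(3)
  have iM: "indsys S indM" and iN: "indsys T indN" using mM mN by (auto intro: matroid_indsys)
  have mL: "matroid (S \<union> T) indL" unfolding indL_def by (rule fp_matroid[OF mM mN disj])
  have finS: "finite S" and finT: "finite T" using mM mN unfolding matroid_def by auto
  have RF: "\<And>X. X \<subseteq> S \<union> T \<Longrightarrow> rk indL X =
     min (rk indM (X \<inter> S) + card (X \<inter> T)) (rk indM S + rk indN (X \<inter> T))"
    unfolding indL_def by (rule rank_formula[OF mM mN disj])
  define R where "R = rk indM S"
  have RF2: "rk indL X = min (rk indM P + card Q) (R + rk indN Q)"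
    if "X \<subseteq> S \<union> T" "X \<inter> S = P" "X \<inter> T = Q" for X P Q
    using RF[OF that(1)] that(2,3) by (simp add: R_def)
  have RM: "rk indM X \<le> R" for X
  proof -
    obtain I where I: "I \<subseteq> X" "indM I" "card I = rk indM X" using rk_obtain[OF iM] by blast
    have "I \<subseteq> S" using iM I(2) unfolding indsys_def by blast
    then show ?thesis using rk_ge[OF iM I(2)] I(3) unfolding R_def by simp
  qed
  have rN0: "rk indN {} = 0" by (rule rk_empty[OF iN])
  have rN1: "rk indN {t} \<le> 1" for t using rk_le_card[OF iN, of "{t}"] by simp
  have rNc: "\<And>X. X \<subseteq> T \<Longrightarrow> rk indN X \<le> card X" using rk_le_card[OF iN] finT finite_subset by blast
  have part2: "cyclic_flat (S \<union> T) indL S \<longleftrightarrow>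
            (\<nexists>e. isthmus S indM e) \<and> (\<nexists>e. loop T indN e)"
  proof -
    have "rk indL S = min (rk indM S + card ({}::'a set)) (R + rk indN {})" by (rule RF2) (use disj in auto)
    then have rS: "rk indL S = R" using rN0 by (simp add: R_def)
    have rSt: "rk indL (insert t S) = min (R + 1) (R + rk indN {t})" if t: "t \<in> T" for t
    proof -
      have "rk indL (insert t S) = min (rk indM S + card {t}) (R + rk indN {t})"
        by (rule RF2) (use t disj in auto)
      then show ?thesis by (simp add: R_def)
    qed
    have rSe: "rk indL (S - {e}) = rk indM (S - {e})" if e: "e \<in> S" for e
    proof -
      have "rk indL (S - {e}) = min (rk indM (S - {e}) + card ({}::'a set)) (R + rk indN {})"
        by (rule RF2) (use e disj in auto)
      then show ?thesis using rN0 RM[of "S - {e}"] by simp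
    qed
    have "cyclic_flat (S \<union> T) indL S \<longleftrightarrow>
        (\<forall>e\<in>T. rk indL S < rk indL (insert e S)) \<and> (\<forall>e\<in>S. rk indL (S - {e}) = rk indL S)"
      unfolding cyclic_flat_iff[OF mL] using disj by auto
    also have "\<dots> \<longleftrightarrow> (\<forall>t\<in>T. rk indN {t} \<noteq> 0) \<and> (\<forall>e\<in>S. rk indM (S - {e}) = R)"
      using rS rSt rSe by auto
    also have "\<dots> \<longleftrightarrow> (\<nexists>e. isthmus S indM e) \<and> (\<nexists>e. loop T indN e)"
      unfolding isthmus_iff[OF mM] loop_iff[OF mN] R_def by auto
    finally show ?thesis .
  qed
  have part1: "cyclic_flat (S \<union> T) indL A \<longleftrightarrow>
              (A \<subseteq> S \<and> cyclic_flat S indM A) \<or>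
              (\<exists>B. B \<noteq> {} \<and> cyclic_flat T indN B \<and> A = S \<union> B)"
    if A: "A \<subseteq> S \<union> T" "A \<noteq> S" for A
  proof -
    have CFL: "cyclic_flat (S \<union> T) indL A \<longleftrightarrow>
        (\<forall>e\<in>(S \<union> T) - A. rk indL A < rk indL (insert e A)) \<and> (\<forall>e\<in>A. rk indL (A - {e}) = rk indL A)"
      unfolding cyclic_flat_iff[OF mL] using A by auto
    show ?thesis
    proof (cases "A \<subseteq> S")
      case True
      have rX: "rk indL X = rk indM X" if X: "X \<subseteq> S" for X
      proof -
        have "rk indL X = min (rk indM X + card ({}::'a set)) (R + rk indN {})"
          by (rule RF2) (use X disj in auto)
        then show ?thesis using rN0 RM[of X] by simp
      qed
      have rAt: "rk indL (insert t A) = min (rk indM A + 1) (R + rk indN {t})" if t: "t \<in> T" for t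
      proof -
        have "rk indL (insert t A) = min (rk indM A + card {t}) (R + rk indN {t})"
          by (rule RF2) (use t True disj A in auto)
        then show ?thesis by simp
      qed
      have no2: "\<not> (\<exists>B. B \<noteq> {} \<and> cyclic_flat T indN B \<and> A = S \<union> B)"
      proof
        assume "\<exists>B. B \<noteq> {} \<and> cyclic_flat T indN B \<and> A = S \<union> B"
        then obtain B where B: "B \<noteq> {}" "cyclic_flat T indN B" "A = S \<union> B" by blast
        have "B \<subseteq> T" using B(2) unfolding cyclic_flat_def flat_def by blast
        then show False using B True disj by auto
      qed
      have CFM: "cyclic_flat S indM A \<longleftrightarrow>
        (\<forall>e\<in>S - A. rk indM A < rk indM (insert e A)) \<and> (\<forall>e\<in>A. rk indM (A - {e}) = rk indM A)"
        unfolding cyclic_flat_iff[OF mM] using True by auto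
      have cyc: "(\<forall>e\<in>A. rk indL (A - {e}) = rk indL A) \<longleftrightarrow> (\<forall>e\<in>A. rk indM (A - {e}) = rk indM A)"
      proof -
        have "\<And>e. e \<in> A \<Longrightarrow> rk indL (A - {e}) = rk indM (A - {e})" using rX True by blast
        then show ?thesis using rX[OF True] by auto
      qed
      have fl: "(\<forall>e\<in>(S \<union> T) - A. rk indL A < rk indL (insert e A)) \<longleftrightarrow>
                (\<forall>e\<in>S - A. rk indM A < rk indM (insert e A))"
      proof
        assume h: "\<forall>e\<in>(S \<union> T) - A. rk indL A < rk indL (insert e A)"
        show "\<forall>e\<in>S - A. rk indM A < rk indM (insert e A)"
        proof
          fix e assume e: "e \<in> S - A"
          then have "rk indL A < rk indL (insert e A)" using h by blast
          moreover have "rk indL A = rk indM A" using rX True by blast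
          moreover have "rk indL (insert e A) = rk indM (insert e A)" using rX True e by blast
          ultimately show "rk indM A < rk indM (insert e A)" by simp
        qed
      next
        assume h: "\<forall>e\<in>S - A. rk indM A < rk indM (insert e A)"
        obtain e0 where e0: "e0 \<in> S - A" using True A by blast
        have "rk indM A < rk indM (insert e0 A)" using h e0 by blast
        then have lt: "rk indM A < R" using RM[of "insert e0 A"] by linarith
        show "\<forall>e\<in>(S \<union> T) - A. rk indL A < rk indL (insert e A)"
        proof
          fix e assume e: "e \<in> (S \<union> T) - A"
          show "rk indL A < rk indL (insert e A)"
          proof (cases "e \<in> S")
            case True
            then have "rk indM A < rk indM (insert e A)" using h e by blast
            moreover have "rk indL A = rk indM A" using rX \<open>A \<subseteq> S\<close> by blast
            moreover have "rk indL (insert e A) = rk indM (insert e A)" using rX \<open>A \<subseteq> S\<close> True by blast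
            ultimately show ?thesis by simp
          next
            case False
            then have "e \<in> T" using e by auto
            then show ?thesis using rAt[of e] rX[of A] \<open>A \<subseteq> S\<close> lt by auto
          qed
        qed
      qed
      show ?thesis using CFL CFM cyc fl no2 True by blast
    next
      case False
      define B where "B = A \<inter> T"
      define AS where "AS = A \<inter> S"
      obtain t0 where t0: "t0 \<in> A" "t0 \<notin> S" using False by blast
      have t0B: "t0 \<in> B" using t0 A B_def by auto
      have BT: "B \<subseteq> T" using B_def by auto
      have finB: "finite B" using BT finT finite_subset by blast
      have rA: "rk indL A = min (rk indM AS + card B) (R + rk indN B)"
        by (rule RF2) (use A in \<open>auto simp: AS_def B_def\<close>)
      have rAmt: "rk indL (A - {t}) = min (rk indM AS + (card B - 1)) (R + rk indN (B - {t}))"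
        if t: "t \<in> B" for t
      proof -
        have "rk indL (A - {t}) = min (rk indM AS + card (B - {t})) (R + rk indN (B - {t}))"
          by (rule RF2) (use A t disj in \<open>auto simp: AS_def B_def\<close>)
        then show ?thesis using t finB by simp
      qed
      have rAiS: "rk indL (insert e A) = min (rk indM (insert e AS) + card B) (R + rk indN B)"
        if e: "e \<in> S" for e
      proof -
        show ?thesis by (rule RF2) (use A e disj in \<open>auto simp: AS_def B_def\<close>)
      qed
      have rAiT: "rk indL (insert t A) = min (rk indM AS + card B + 1) (R + rk indN (insert t B))"
        if t: "t \<in> T" "t \<notin> A" for t
      proof -
        have "rk indL (insert t A) = min (rk indM AS + card (insert t B)) (R + rk indN (insert t B))"
          by (rule RF2) (use A t disj in \<open>auto simp: AS_def B_def\<close>)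
        moreover have "t \<notin> B" using t B_def by auto
        ultimately show ?thesis using finB by simp
      qed
      have rAmS: "rk indL (A - {e}) = min (rk indM (AS - {e}) + card B) (R + rk indN B)"
        if e: "e \<in> S" for e
      proof -
        show ?thesis by (rule RF2) (use A e disj in \<open>auto simp: AS_def B_def\<close>)
      qed
      have cB: "card B \<ge> 1" using t0B finB by (metis One_nat_def Suc_leI card_gt_0_iff empty_iff)
      have no1: "\<not> (A \<subseteq> S \<and> cyclic_flat S indM A)" using False by blast
      show ?thesis
      proof
        assume L: "cyclic_flat (S \<union> T) indL A"
        then have fl: "\<forall>e\<in>(S \<union> T) - A. rk indL A < rk indL (insert e A)"
          and cy: "\<forall>e\<in>A. rk indL (A - {e}) = rk indL A" using CFL by auto
        have "rk indL (A - {t0}) = rk indL A" using cy t0 by auto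
        then have lt: "R + rk indN B < rk indM AS + card B"
          using rA rAmt[OF t0B] cB by (simp add: min_def split: if_splits)
        then have rA': "rk indL A = R + rk indN B" using rA by simp
        have SA: "S \<subseteq> A"
        proof
          fix e assume e: "e \<in> S"
          show "e \<in> A"
          proof (rule ccontr)
            assume "e \<notin> A"
            then have "rk indL A < rk indL (insert e A)" using fl e by auto
            then show False using rAiS[OF e] rA' by simp
          qed
        qed
        have AE: "A = S \<union> B" using SA A B_def by auto
        have ASS: "AS = S" using SA AS_def by auto
        have cfB: "cyclic_flat T indN B"
          unfolding cyclic_flat_iff[OF mN]
        proof (intro conjI ballI)
          show "B \<subseteq> T" by fact
        next
          fix t assume t: "t \<in> T - B"
          then have tA: "t \<notin> A" using B_def by auto
          then have "rk indL A < rk indL (insert t A)" using fl t by auto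
          then show "rk indN B < rk indN (insert t B)" using rAiT[of t] t tA rA' by simp
        next
          fix t assume t: "t \<in> B"
          then have "rk indL (A - {t}) = rk indL A" using cy B_def by auto
          then have "rk indN B \<le> rk indN (B - {t})" using rAmt[OF t] rA' by simp
          moreover have "rk indN (B - {t}) \<le> rk indN B" by (rule rk_mono[OF iN]) auto
          ultimately show "rk indN (B - {t}) = rk indN B" by simp
        qed
        show "(A \<subseteq> S \<and> cyclic_flat S indM A) \<or> (\<exists>B. B \<noteq> {} \<and> cyclic_flat T indN B \<and> A = S \<union> B)"
          using cfB AE t0B by blast
      next
        assume "(A \<subseteq> S \<and> cyclic_flat S indM A) \<or> (\<exists>B. B \<noteq> {} \<and> cyclic_flat T indN B \<and> A = S \<union> B)"
        then obtain B' where B': "B' \<noteq> {}" "cyclic_flat T indN B'" "A = S \<union> B'" using no1 by blast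
        have B'T: "B' \<subseteq> T" using B'(2) unfolding cyclic_flat_def flat_def by blast
        have BB: "B = B'" using B'T B'(3) disj B_def by auto
        have ASS: "AS = S" using B'(3) AS_def by auto
        have cfB: "B \<subseteq> T" "\<forall>e\<in>T - B. rk indN B < rk indN (insert e B)"
            "\<forall>e\<in>B. rk indN (B - {e}) = rk indN B"
          using B'(2) BB unfolding cyclic_flat_iff[OF mN] by auto
        have rBc: "rk indN B \<le> card B" using rNc[OF BT] .
        have rA': "rk indL A = R + rk indN B" using rA ASS rBc by (simp add: R_def)
        have dep: "rk indN B < card B"
        proof -
          have "rk indN (B - {t0}) \<le> card (B - {t0})" using rNc[of "B - {t0}"] BT by auto
          then show ?thesis using cfB(3) t0B finB cB by auto
        qed
        show "cyclic_flat (S \<union> T) indL A"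
          unfolding CFL
        proof (intro conjI ballI)
          fix e assume e: "e \<in> (S \<union> T) - A"
          then have eT: "e \<in> T" "e \<notin> A" using B'(3) by auto
          then have eB: "e \<in> T - B" using B_def by auto
          have "rk indN (insert e B) \<le> card (insert e B)" using rNc[of "insert e B"] BT eT by auto
          then have "rk indN (insert e B) \<le> card B + 1" using finB eB by simp
          then show "rk indL A < rk indL (insert e A)"
            using rAiT[OF eT] rA' ASS cfB(2) eB by (simp add: R_def)
        next
          fix e assume e: "e \<in> A"
          show "rk indL (A - {e}) = rk indL A"
          proof (cases "e \<in> S")
            case True
            have "R \<le> rk indM (S - {e}) + 1"
              using rk_insert[OF mM, of e "S - {e}"] True by (simp add: R_def insert_absorb)
            then show ?thesis using rAmS[OF True] rA' ASS dep by (simp add: R_def)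
          next
            case False
            then have eB: "e \<in> B" using e B_def A by auto
            have "rk indN (B - {e}) \<le> card (B - {e})" using rNc[of "B - {e}"] BT by auto
            then have "rk indN (B - {e}) \<le> card B - 1" using eB finB by simp
            then show ?thesis using rAmt[OF eB] rA' ASS cfB(3) eB by (simp add: R_def)
          qed
        qed
      qed
    qed
  qed
  show ?thesis using part1 part2 by blast
qed


end
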